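(* Let $k$ be a field, $d>0$ an integer that is not a multiple of the characteristic of $k$, and $a_1,\ldots,a_n\in k$ all nonzero. Then the diagonal form $a_1x_1^d+\cdots+a_nx_n^d\in k[x_1,\ldots,x_n]$ has strength at least $n/2$.
   Context: For a homogeneous polynomial $f$ of degree $d>0$ over $k$, $\operatorname{str}(f)$ is the minimal $s\ge 0$ such that $f=g_1h_1+\cdots+g_sh_s$ with $g_i,h_i$ homogeneous polynomials over $k$ of degrees $<d$ ($\infty$ if no such expression exists). *)

theory Defs
  imports "HOL-Library.Poly_Mapping" "HOL-Library.Extended_Nat"
begin

text \<open>Multivariate polynomials over 'a in the variables x_0, x_1, ... (indexed by nat):
  a finitely supported map from monomials (exponent vectors nat =>0 nat) to coefficients.
  Multiplication is the convolution product provided by Poly_Mapping.\<close>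
type_synonym 'a mpoly = "(nat \<Rightarrow>\<^sub>0 nat) \<Rightarrow>\<^sub>0 'a"

definition mon_deg :: "(nat \<Rightarrow>\<^sub>0 nat) \<Rightarrow> nat" where
  "mon_deg m = (\<Sum>i\<in>Poly_Mapping.keys m. Poly_Mapping.lookup m i)"

text \<open>p is homogeneous of degree e (the zero polynomial is homogeneous of every degree).\<close>
definition homogeneous :: "nat \<Rightarrow> 'a::zero mpoly \<Rightarrow> bool" where
  "homogeneous e p \<longleftrightarrow> (\<forall>m\<in>Poly_Mapping.keys p. mon_deg m = e)"

definition in_vars :: "nat set \<Rightarrow> 'a::zero mpoly \<Rightarrow> bool" where
  "in_vars V p \<longleftrightarrow> (\<forall>m\<in>Poly_Mapping.keys p. Poly_Mapping.keys m \<subseteq> V)"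

text \<open>Strength of a homogeneous polynomial f of degree d in k[x_0,...,x_(n-1)]:
  the minimal s such that f = g_1 h_1 + ... + g_s h_s with g_i, h_i homogeneous
  polynomials (in the same variables) of degrees < d; infinity if no such expression.\<close>
definition strength :: "nat \<Rightarrow> nat \<Rightarrow> 'a::comm_ring_1 mpoly \<Rightarrow> enat" where
  "strength n d f = Inf {enat s | s. \<exists>g h :: nat \<Rightarrow> 'a mpoly.
      (\<forall>i<s. (\<exists>e<d. homogeneous e (g i)) \<and> in_vars {..<n} (g i)) \<and>
      (\<forall>i<s. (\<exists>e<d. homogeneous e (h i)) \<and> in_vars {..<n} (h i)) \<and>
      f = (\<Sum>i<s. g i * h i)}"

text \<open>The diagonal form a_1 x_1^d + ... + a_n x_n^d (variables indexed 0..n-1).\<close>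
definition diagonal_form :: "nat \<Rightarrow> nat \<Rightarrow> (nat \<Rightarrow> 'a::comm_ring_1) \<Rightarrow> 'a mpoly" where
  "diagonal_form n d a = (\<Sum>i<n. Poly_Mapping.single (Poly_Mapping.single i d) (a i))"

end

theory Submission
  imports Defs "HOL-Library.FuncSet"
begin

definition sc :: "'k::field \<Rightarrow> 'k mpoly \<Rightarrow> 'k mpoly" where
  "sc c p = Poly_Mapping.single 0 c * p"

lemma lookup_sc: "Poly_Mapping.lookup (sc c p) k = c * Poly_Mapping.lookup p k"
  unfolding sc_def mult_map_scale_conv_mult[symmetric]
  by (simp add: Poly_Mapping.map.rep_eq when_def)

lemma vs_sc: "vector_space (sc :: 'k::field \<Rightarrow> 'k mpoly \<Rightarrow> 'k mpoly)"
proof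
  fix a b :: 'k and x y :: "'k mpoly"
  show "sc a (x + y) = sc a x + sc a y" by (simp add: sc_def distrib_left)
  show "sc (a + b) x = sc a x + sc b x" by (simp add: sc_def single_add distrib_right)
  have "Poly_Mapping.single 0 a * (Poly_Mapping.single 0 b * x) = (Poly_Mapping.single 0 a * Poly_Mapping.single 0 b) * x"
    by (rule mult.assoc[symmetric])
  then show "sc a (sc b x) = sc (a * b) x" by (simp add: sc_def mult_single)
  show "sc 1 x = x" by (simp add: sc_def)
qed

interpretation mp: vector_space "sc :: 'k::field \<Rightarrow> 'k mpoly \<Rightarrow> 'k mpoly"
  by (rule vs_sc)

definition mon :: "(nat \<Rightarrow>\<^sub>0 nat) \<Rightarrow> 'k::field mpoly" where
  "mon a = Poly_Mapping.single a 1"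

lemma sc_mon: "sc c (mon a) = Poly_Mapping.single a c"
  by (simp add: sc_def mon_def mult_single)

lemma mpoly_expand:
  "(p::'k::field mpoly) = (\<Sum>a\<in>Poly_Mapping.keys p. sc (Poly_Mapping.lookup p a) (mon a))"
proof (rule poly_mapping_eqI)
  fix k
  have "Poly_Mapping.lookup (\<Sum>a\<in>Poly_Mapping.keys p. sc (Poly_Mapping.lookup p a) (mon a)) k
     = (\<Sum>a\<in>Poly_Mapping.keys p. (if a = k then Poly_Mapping.lookup p a else 0))"
    by (simp add: lookup_sum sc_mon lookup_single when_def)
  also have "\<dots> = Poly_Mapping.lookup p k"
    by (simp add: in_keys_iff)
  finally show "Poly_Mapping.lookup p k = Poly_Mapping.lookup (\<Sum>a\<in>Poly_Mapping.keys p. sc (Poly_Mapping.lookup p a) (mon a)) k" by simp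
qed

lemma in_span_mon: "(p::'k::field mpoly) \<in> mp.span (mon ` Poly_Mapping.keys p)"
  apply (subst mpoly_expand)
  by (intro mp.span_sum mp.span_scale mp.span_base) auto

lemma mon_inj: "mon a = (mon b :: 'k::field mpoly) \<longleftrightarrow> a = b"
  unfolding mon_def by (metis lookup_single_eq lookup_single_not_eq zero_neq_one)

lemma lookup_mon: "Poly_Mapping.lookup (mon a :: 'k::field mpoly) b = (if a = b then 1 else 0)"
  unfolding mon_def by (simp add: lookup_single when_def)

lemma keys_mon[simp]: "Poly_Mapping.keys (mon a :: 'k::field mpoly) = {a}"
  unfolding mon_def by simp

lemma mon_add: "mon (a + b) = (mon a * mon b :: 'k::field mpoly)"
  unfolding mon_def by (simp add: mult_single)

lemma indep_mon: "mp.independent (mon ` X :: 'k::field mpoly set)"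
  unfolding mp.independent_explicit_finite_subsets
proof (intro allI impI ballI)
  fix S u v
  assume S: "S \<subseteq> mon ` X" "finite S" and sum0: "(\<Sum>v\<in>S. sc (u v) v) = (0::'k mpoly)" and v: "v \<in> S"
  obtain a where va: "v = mon a" using S v by auto
  have "0 = Poly_Mapping.lookup (\<Sum>v\<in>S. sc (u v) v) a" using sum0 by simp
  also have "\<dots> = (\<Sum>w\<in>S. u w * Poly_Mapping.lookup w a)" by (simp add: lookup_sum lookup_sc)
  also have "\<dots> = u v * Poly_Mapping.lookup v a + (\<Sum>w\<in>S-{v}. u w * Poly_Mapping.lookup w a)"
    using S v by (simp add: sum.remove)
  also have "(\<Sum>w\<in>S-{v}. u w * Poly_Mapping.lookup w a) = 0"
  proof (rule sum.neutral, rule ballI)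
    fix w assume "w \<in> S - {v}"
    then obtain b where "w = mon b" "b \<noteq> a" using S va by auto
    then show "u w * Poly_Mapping.lookup w a = 0" by (simp add: lookup_mon)
  qed
  finally show "u v = 0" by (simp add: va lookup_mon)
qed

lemma mon_deg_superset:
  "finite S \<Longrightarrow> Poly_Mapping.keys m \<subseteq> S \<Longrightarrow> mon_deg m = (\<Sum>i\<in>S. Poly_Mapping.lookup m i)"
  unfolding mon_deg_def by (rule sum.mono_neutral_left) (auto simp: in_keys_iff)

lemma mon_deg_add: "mon_deg (a + b) = mon_deg a + mon_deg b"
proof -
  let ?S = "Poly_Mapping.keys a \<union> Poly_Mapping.keys b"
  have "mon_deg (a + b) = (\<Sum>i\<in>?S. Poly_Mapping.lookup (a+b) i)"
    using keys_add[of a b] by (intro mon_deg_superset) auto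
  also have "\<dots> = (\<Sum>i\<in>?S. Poly_Mapping.lookup a i) + (\<Sum>i\<in>?S. Poly_Mapping.lookup b i)"
    by (simp add: lookup_add sum.distrib)
  also have "\<dots> = mon_deg a + mon_deg b"
    by (subst (1 2) mon_deg_superset[of ?S]) auto
  finally show ?thesis .
qed

lemma homogeneous_mult:
  assumes "homogeneous e p" "homogeneous e' q"
  shows "homogeneous (e + e') (p * (q :: 'k::field mpoly))"
  unfolding homogeneous_def
proof
  fix m assume "m \<in> Poly_Mapping.keys (p * q)"
  then obtain a b where "m = a + b" "a \<in> Poly_Mapping.keys p" "b \<in> Poly_Mapping.keys q"
    using keys_mult by blast
  then show "mon_deg m = e + e'" using assms by (simp add: homogeneous_def mon_deg_add)
qed

definition hc :: "nat \<Rightarrow> 'k::field mpoly \<Rightarrow> 'k mpoly" where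
  "hc D p = Abs_poly_mapping (\<lambda>k. if mon_deg k = D then Poly_Mapping.lookup p k else 0)"

lemma lookup_hc: "Poly_Mapping.lookup (hc D p) k = (if mon_deg k = D then Poly_Mapping.lookup p k else 0)"
proof -
  have "{k. (if mon_deg k = D then Poly_Mapping.lookup p k else 0) \<noteq> 0} \<subseteq> Poly_Mapping.keys p"
    by (auto simp: in_keys_iff split: if_splits)
  then have "finite {k. (if mon_deg k = D then Poly_Mapping.lookup p k else 0) \<noteq> 0}"
    by (rule finite_subset) simp
  from lookup_Abs_poly_mapping[OF this] show ?thesis unfolding hc_def by (rule fun_cong)
qed

lemma hc_add: "hc D (p + q) = hc D p + hc D q"
  by (rule poly_mapping_eqI) (simp add: lookup_hc lookup_add)

lemma hc_0[simp]: "hc D 0 = 0"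
  by (rule poly_mapping_eqI) (simp add: lookup_hc)

lemma hc_sum: "hc D (\<Sum>i\<in>A. f i) = (\<Sum>i\<in>A. hc D (f i))"
  by (induction A rule: infinite_finite_induct) (simp_all add: hc_add)

lemma hc_id: "homogeneous D p \<Longrightarrow> hc D p = p"
  by (rule poly_mapping_eqI) (auto simp: lookup_hc homogeneous_def in_keys_iff)

lemma hc_zero: "(\<forall>k\<in>Poly_Mapping.keys p. mon_deg k \<noteq> D) \<Longrightarrow> hc D p = 0"
  by (rule poly_mapping_eqI) (auto simp: lookup_hc in_keys_iff)

lemma keys_hc: "Poly_Mapping.keys (hc D p) \<subseteq> Poly_Mapping.keys p"
  by (auto simp: in_keys_iff lookup_hc split: if_splits)

lemma hom_hc: "homogeneous D (hc D p)"
  unfolding homogeneous_def by (auto simp: in_keys_iff lookup_hc split: if_splits)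

lemma hc_mult:
  assumes "homogeneous e p"
  shows "hc D (p * q) = (if e \<le> D then p * hc (D - e) q else (0 :: 'k::field mpoly))"
proof -
  define q1 where "q1 = hc (D - e) q"
  define q2 where "q2 = q - q1"
  have q: "q = q1 + q2" by (simp add: q2_def)
  have k2: "mon_deg b \<noteq> D - e" if "b \<in> Poly_Mapping.keys q2" for b
    using that by (auto simp: q2_def q1_def in_keys_iff lookup_minus lookup_hc)
  have z: "hc D (p * q2) = 0"
    if "e \<le> D"
  proof (rule hc_zero, rule ballI)
    fix m assume "m \<in> Poly_Mapping.keys (p * q2)"
    then obtain a b where "m = a + b" "a \<in> Poly_Mapping.keys p" "b \<in> Poly_Mapping.keys q2"
      using keys_mult by blast
    then show "mon_deg m \<noteq> D" using assms k2 that by (force simp: homogeneous_def mon_deg_add)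
  qed
  show ?thesis
  proof (cases "e \<le> D")
    case True
    have "homogeneous (e + (D - e)) (p * q1)"
      unfolding q1_def by (rule homogeneous_mult[OF assms hom_hc])
    then have h1: "hc D (p * q1) = p * q1" using True by (intro hc_id) simp
    have "p * q = p * q1 + p * q2" by (simp add: q2_def algebra_simps)
    then have "hc D (p * q) = hc D (p * q1) + hc D (p * q2)" by (simp only: hc_add)
    then show ?thesis using True z h1 by (simp add: q1_def)
  next
    case False
    have "hc D (p * q) = 0"
    proof (rule hc_zero, rule ballI)
      fix m assume "m \<in> Poly_Mapping.keys (p * q)"
      then obtain a b where "m = a + b" "a \<in> Poly_Mapping.keys p" "b \<in> Poly_Mapping.keys q"
        using keys_mult by blast
      then show "mon_deg m \<noteq> D" using assms False by (force simp: homogeneous_def mon_deg_add)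
    qed
    then show ?thesis using False by simp
  qed
qed


lemma in_vars_add: "in_vars V p \<Longrightarrow> in_vars V q \<Longrightarrow> in_vars V (p + q)"
  unfolding in_vars_def
proof (intro ballI)
  fix m assume "\<forall>m\<in>Poly_Mapping.keys p. Poly_Mapping.keys m \<subseteq> V"
    "\<forall>m\<in>Poly_Mapping.keys q. Poly_Mapping.keys m \<subseteq> V" "m \<in> Poly_Mapping.keys (p + q)"
  moreover have "Poly_Mapping.keys (p + q) \<subseteq> Poly_Mapping.keys p \<union> Poly_Mapping.keys q" by (rule keys_add)
  ultimately show "Poly_Mapping.keys m \<subseteq> V" by auto
qed

lemma in_vars_0[simp]: "in_vars V 0"
  unfolding in_vars_def by simp

lemma in_vars_sum: "(\<And>i. i \<in> A \<Longrightarrow> in_vars V (f i)) \<Longrightarrow> in_vars V (\<Sum>i\<in>A. f i)"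
  by (induction A rule: infinite_finite_induct) (auto intro: in_vars_add)

lemma keys_add_nat: "Poly_Mapping.keys ((a::nat \<Rightarrow>\<^sub>0 nat) + b) = Poly_Mapping.keys a \<union> Poly_Mapping.keys b"
  by (auto simp: in_keys_iff lookup_add)

lemma in_vars_mult: "in_vars V p \<Longrightarrow> in_vars V q \<Longrightarrow> in_vars V (p * (q::'k::field mpoly))"
  unfolding in_vars_def
proof
  fix m assume p: "\<forall>m\<in>Poly_Mapping.keys p. Poly_Mapping.keys m \<subseteq> V"
    and q: "\<forall>m\<in>Poly_Mapping.keys q. Poly_Mapping.keys m \<subseteq> V" and "m \<in> Poly_Mapping.keys (p * q)"
  then obtain a b where "m = a + b" "a \<in> Poly_Mapping.keys p" "b \<in> Poly_Mapping.keys q"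
    using keys_mult by blast
  then show "Poly_Mapping.keys m \<subseteq> V" using p q by (auto simp: keys_add_nat)
qed

lemma in_vars_mon: "Poly_Mapping.keys a \<subseteq> V \<Longrightarrow> in_vars V (mon a :: 'k::field mpoly)"
  unfolding in_vars_def by simp

lemma in_vars_hc: "in_vars V p \<Longrightarrow> in_vars V (hc D p)"
  unfolding in_vars_def using keys_hc by blast

lemma keys_sc: "Poly_Mapping.keys (sc c p) \<subseteq> Poly_Mapping.keys p"
  by (auto simp: in_keys_iff lookup_sc)

lemma in_vars_sc: "in_vars V p \<Longrightarrow> in_vars V (sc c p)"
  unfolding in_vars_def using keys_sc by blast

definition der :: "nat \<Rightarrow> 'k::field mpoly \<Rightarrow> 'k mpoly" where
  "der j p = (\<Sum>a\<in>Poly_Mapping.keys p.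
      Poly_Mapping.single (a - Poly_Mapping.single j 1) (of_nat (Poly_Mapping.lookup a j) * Poly_Mapping.lookup p a))"

lemma der_superset:
  assumes "finite A" "Poly_Mapping.keys p \<subseteq> A"
  shows "der j p = (\<Sum>a\<in>A.
      Poly_Mapping.single (a - Poly_Mapping.single j 1) (of_nat (Poly_Mapping.lookup a j) * Poly_Mapping.lookup p a))"
  unfolding der_def using assms by (intro sum.mono_neutral_left) (auto simp: in_keys_iff)

lemma der_add: "der j (p + q) = der j p + der j q"
proof -
  let ?A = "Poly_Mapping.keys p \<union> Poly_Mapping.keys q"
  have "der j (p + q) = (\<Sum>a\<in>?A.
      Poly_Mapping.single (a - Poly_Mapping.single j 1) (of_nat (Poly_Mapping.lookup a j) * Poly_Mapping.lookup (p+q) a))"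
    using keys_add[of p q] by (intro der_superset) auto
  also have "\<dots> = der j p + der j q"
    by (subst (1 2) der_superset[of ?A]) (auto simp: lookup_add distrib_left single_add sum.distrib)
  finally show ?thesis .
qed

lemma der_0[simp]: "der j 0 = 0"
  by (simp add: der_def)

lemma der_sum: "der j (\<Sum>i\<in>A. f i) = (\<Sum>i\<in>A. der j (f i))"
  by (induction A rule: infinite_finite_induct) (simp_all add: der_add)

lemma der_single: "der j (Poly_Mapping.single a c) =
   Poly_Mapping.single (a - Poly_Mapping.single j 1) (of_nat (Poly_Mapping.lookup a j) * c)"
  by (subst der_superset[of "{a}"]) auto

lemma minus_add_swap:
  assumes "0 < Poly_Mapping.lookup a j"
  shows "a - Poly_Mapping.single j 1 + b = a + b - Poly_Mapping.single j (1::nat)"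
  by (rule poly_mapping_eqI) (use assms in \<open>auto simp add: lookup_add lookup_minus lookup_single when_def\<close>)

lemma minus_add_swap2:
  assumes "0 < Poly_Mapping.lookup b j"
  shows "a + (b - Poly_Mapping.single j 1) = a + b - Poly_Mapping.single j (1::nat)"
  using minus_add_swap[OF assms, of a] by (simp add: add.commute)

lemma der_mult_single:
  "der j (Poly_Mapping.single a c * Poly_Mapping.single b c') =
   der j (Poly_Mapping.single a c) * Poly_Mapping.single b c' + Poly_Mapping.single a c * der j (Poly_Mapping.single b (c' :: 'k::field))"
proof -
  let ?d = "Poly_Mapping.single j (1::nat)"
  have 1: "Poly_Mapping.single (a - ?d + b) (of_nat (Poly_Mapping.lookup a j) * c * c')
     = Poly_Mapping.single (a + b - ?d) (of_nat (Poly_Mapping.lookup a j) * c * c')"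
    by (cases "Poly_Mapping.lookup a j = 0") (simp, subst minus_add_swap, auto)
  have 2: "Poly_Mapping.single (a + (b - ?d)) (c * (of_nat (Poly_Mapping.lookup b j) * c'))
     = Poly_Mapping.single (a + b - ?d) (of_nat (Poly_Mapping.lookup b j) * c * c')"
    by (cases "Poly_Mapping.lookup b j = 0") (simp, subst minus_add_swap2, auto simp: mult_ac)
  have 3: "der j (Poly_Mapping.single a c) * Poly_Mapping.single b c' =
     Poly_Mapping.single (a - ?d + b) (of_nat (Poly_Mapping.lookup a j) * c * c')"
    by (simp only: der_single mult_single)
  have 4: "Poly_Mapping.single a c * der j (Poly_Mapping.single b c') =
     Poly_Mapping.single (a + (b - ?d)) (c * (of_nat (Poly_Mapping.lookup b j) * c'))"
    by (simp only: der_single mult_single)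
  have 5: "der j (Poly_Mapping.single a c * Poly_Mapping.single b c') =
     Poly_Mapping.single (a + b - ?d) (of_nat (Poly_Mapping.lookup a j) * c * c' + of_nat (Poly_Mapping.lookup b j) * c * c')"
    by (simp only: der_single mult_single lookup_add of_nat_add distrib_right mult.assoc)
  show ?thesis
    unfolding 3 4 5 1 2 single_add by simp
qed

lemma der_mult_sums:
  "der j ((\<Sum>a\<in>A. Poly_Mapping.single a (f a)) * (\<Sum>b\<in>B. Poly_Mapping.single b (g b))) =
   der j (\<Sum>a\<in>A. Poly_Mapping.single a (f a)) * (\<Sum>b\<in>B. Poly_Mapping.single b (g b)) +
   (\<Sum>a\<in>A. Poly_Mapping.single a (f a)) * der j (\<Sum>b\<in>B. Poly_Mapping.single b (g b :: 'k::field))"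
  by (simp add: sum_product der_sum der_mult_single sum.distrib)

lemma der_mult: "der j (p * q) = der j p * q + p * der j (q :: 'k::field mpoly)"
proof -
  have p: "(\<Sum>a\<in>Poly_Mapping.keys p. Poly_Mapping.single a (Poly_Mapping.lookup p a)) = p"
    by (subst (2) mpoly_expand) (simp add: sc_mon)
  have q: "(\<Sum>b\<in>Poly_Mapping.keys q. Poly_Mapping.single b (Poly_Mapping.lookup q b)) = q"
    by (subst (2) mpoly_expand) (simp add: sc_mon)
  show ?thesis
    using der_mult_sums[where j=j and A="Poly_Mapping.keys p" and f="Poly_Mapping.lookup p" and B="Poly_Mapping.keys q" and g="Poly_Mapping.lookup q"]
    unfolding p q .
qed

lemma keys_minus_nat: "Poly_Mapping.keys ((a::nat \<Rightarrow>\<^sub>0 nat) - b) \<subseteq> Poly_Mapping.keys a"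
  by (auto simp: in_keys_iff lookup_minus)

lemma in_vars_der: "in_vars V p \<Longrightarrow> in_vars V (der j p)"
  unfolding der_def
  by (intro in_vars_sum) (auto simp: in_vars_def dest!: subsetD[OF keys_minus_nat] split: if_splits)

lemma der_diag:
  assumes "j < n"
  shows "der j (diagonal_form n d a) = Poly_Mapping.single (Poly_Mapping.single j (d - 1)) (of_nat d * (a j :: 'k::field))"
proof -
  have "der j (diagonal_form n d a) = (\<Sum>i<n. if i = j then
      Poly_Mapping.single (Poly_Mapping.single j (d - 1)) (of_nat d * a j) else 0)"
    unfolding diagonal_form_def der_sum der_single
    by (intro sum.cong refl) (auto simp: lookup_single single_diff[symmetric])
  also have "\<dots> = Poly_Mapping.single (Poly_Mapping.single j (d - 1)) (of_nat d * a j)"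
    using assms by simp
  finally show ?thesis .
qed


definition vecpm :: "nat \<Rightarrow> (nat \<Rightarrow> nat) \<Rightarrow> (nat \<Rightarrow>\<^sub>0 nat)" where
  "vecpm n F = Abs_poly_mapping (\<lambda>j. if j < n then F j else 0)"

lemma lookup_vecpm: "Poly_Mapping.lookup (vecpm n F) j = (if j < n then F j else 0)"
proof -
  have "{j. (if j < n then F j else 0) \<noteq> 0} \<subseteq> {..<n}" by (auto split: if_splits)
  then have "finite {j. (if j < n then F j else 0) \<noteq> (0::nat)}"
    by (rule finite_subset) simp
  from lookup_Abs_poly_mapping[OF this] show ?thesis unfolding vecpm_def by (rule fun_cong)
qed

lemma keys_vecpm: "Poly_Mapping.keys (vecpm n F) \<subseteq> {..<n}"
  by (auto simp: in_keys_iff lookup_vecpm split: if_splits)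

lemma inj_vecpm: "inj_on (vecpm n) (PiE {..<n} B)"
proof (rule inj_onI)
  fix F G assume F: "F \<in> PiE {..<n} B" and G: "G \<in> PiE {..<n} B" and eq: "vecpm n F = vecpm n G"
  show "F = G"
  proof (rule PiE_ext[OF F G])
    fix i assume "i \<in> {..<n}"
    then show "F i = G i" using arg_cong[OF eq, of "\<lambda>x. Poly_Mapping.lookup x i"]
      by (simp add: lookup_vecpm)
  qed
qed

lemma vecpm_restrict:
  assumes "Poly_Mapping.keys \<alpha> \<subseteq> {..<n}"
  shows "vecpm n (restrict (Poly_Mapping.lookup \<alpha>) {..<n}) = \<alpha>"
proof (rule poly_mapping_eqI)
  fix j
  show "Poly_Mapping.lookup (vecpm n (restrict (Poly_Mapping.lookup \<alpha>) {..<n})) j = Poly_Mapping.lookup \<alpha> j"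
    using assms by (auto simp: lookup_vecpm in_keys_iff restrict_def)
qed

lemma arith_contra:
  fixes n m c L :: nat
  assumes n1: "1 \<le> n" and mn: "m < n" and L: "L = n ^ (n - 1) * c ^ n"
    and ineq: "(L + 1) ^ n \<le> (n * L + 1) ^ m * c ^ n"
  shows False
proof (cases "c = 0")
  case True
  show False using ineq True n1 by (simp add: power_0_left)
next
  case False
  have "(n * L + 1) ^ m \<le> (n * (L + 1)) ^ m"
    using n1 by (intro power_mono) auto
  also have "\<dots> \<le> (n * (L + 1)) ^ (n - 1)"
    using n1 mn by (intro power_increasing) auto
  also have "\<dots> = n ^ (n - 1) * (L + 1) ^ (n - 1)" by (rule power_mult_distrib)
  finally have a: "(n * L + 1) ^ m \<le> n ^ (n - 1) * (L + 1) ^ (n - 1)" .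
  have b: "(L + 1) ^ n = (L + 1) * (L + 1) ^ (n - 1)"
    using n1 by (metis Suc_diff_1 less_le_trans power_Suc zero_less_one)
  have "(L + 1) * (L + 1) ^ (n - 1) \<le> n ^ (n - 1) * (L + 1) ^ (n - 1) * c ^ n"
    using ineq a b by (metis mult_le_mono1 order_trans)
  also have "\<dots> = L * (L + 1) ^ (n - 1)" by (simp add: L mult_ac)
  finally have "(L + 1) * (L + 1) ^ (n - 1) \<le> L * (L + 1) ^ (n - 1)" .
  then have "L + 1 \<le> L" by simp
  then show False by simp
qed

lemma hom_mon: "homogeneous (mon_deg a) (mon a :: 'k::field mpoly)"
  unfolding homogeneous_def by simp

lemma core:
  fixes p :: "'i \<Rightarrow> 'k::field mpoly" and e :: "'i \<Rightarrow> nat"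
  assumes finI: "finite I" and cardI: "card I < n"
    and hom: "\<forall>i\<in>I. homogeneous (e i) (p i) \<and> 1 \<le> e i"
    and gen: "\<forall>j<n. \<exists>r. (\<forall>i\<in>I. in_vars {..<n} (r i)) \<and>
                 mon (Poly_Mapping.single j (d - 1)) = (\<Sum>i\<in>I. p i * r i)"
  shows False
proof -
  define Mset where "Mset = vecpm n ` PiE {..<n} (\<lambda>_. {..<d-1})"
  define P where "P \<beta> = (\<Prod>i\<in>I. p i ^ \<beta> i)" for \<beta>
  define T where "T D = (\<lambda>(\<beta>, \<mu>). P \<beta> * mon \<mu>) ` (PiE I (\<lambda>_. {..D}) \<times> Mset)" for D
  have T_mono: "T D1 \<subseteq> T D2" if "D1 \<le> D2" for D1 D2
    unfolding T_def using that by (intro image_mono Sigma_mono PiE_mono) auto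
  have P_upd: "P (\<beta>(i := Suc (\<beta> i))) = p i * P \<beta>" if i: "i \<in> I" for \<beta> i
  proof -
    have "P (\<beta>(i := Suc (\<beta> i))) = p i ^ Suc (\<beta> i) * (\<Prod>k\<in>I-{i}. p k ^ (\<beta>(i := Suc (\<beta> i))) k)"
      unfolding P_def using finI i by (simp add: prod.remove)
    also have "(\<Prod>k\<in>I-{i}. p k ^ (\<beta>(i := Suc (\<beta> i))) k) = (\<Prod>k\<in>I-{i}. p k ^ \<beta> k)"
      by (intro prod.cong) auto
    also have "p i ^ Suc (\<beta> i) * (\<Prod>k\<in>I-{i}. p k ^ \<beta> k) = p i * (p i ^ \<beta> i * (\<Prod>k\<in>I-{i}. p k ^ \<beta> k))"
      by (simp add: mult.assoc)
    also have "p i ^ \<beta> i * (\<Prod>k\<in>I-{i}. p k ^ \<beta> k) = P \<beta>"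
      unfolding P_def using finI i by (simp add: prod.remove)
    finally show ?thesis .
  qed
  have mult_span: "p i * x \<in> mp.span (T D)"
    if x: "x \<in> mp.span (T D0)" and lt: "D0 < D" and i: "i \<in> I" for x D0 D i
    using x
  proof (induction rule: mp.span_induct_alt)
    case base
    show ?case by (simp add: mp.span_zero)
  next
    case (step c x y)
    obtain \<beta> \<mu> where b: "\<beta> \<in> PiE I (\<lambda>_. {..D0})" and mu: "\<mu> \<in> Mset" and xe: "x = P \<beta> * mon \<mu>"
      using step.hyps unfolding T_def by auto
    have "\<beta> i \<le> D0" using b i by auto
    then have "Suc (\<beta> i) \<in> {..D}" using lt by simp
    have "PiE I (\<lambda>_. {..D0}) \<subseteq> PiE I (\<lambda>_. {..D})"
      by (rule PiE_mono) (use lt in auto)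
    then have "\<beta> \<in> PiE I (\<lambda>_. {..D})" using b by blast
    then have "\<beta>(i := Suc (\<beta> i)) \<in> PiE (insert i I) (\<lambda>_. {..D})"
      using \<open>Suc (\<beta> i) \<in> {..D}\<close> by (intro PiE_fun_upd)
    then have b2: "\<beta>(i := Suc (\<beta> i)) \<in> PiE I (\<lambda>_. {..D})" using i by (simp add: insert_absorb)
    have "p i * x = P (\<beta>(i := Suc (\<beta> i))) * mon \<mu>"
      by (simp add: xe P_upd[OF i] mult.assoc)
    then have "p i * x \<in> T D" unfolding T_def using b2 mu by force
    then have "p i * x \<in> mp.span (T D)" by (rule mp.span_base)
    moreover have "p i * (sc c x + y) = sc c (p i * x) + p i * y"
      by (simp add: sc_def algebra_simps)
    ultimately show ?case using step.IH by (simp add: mp.span_add mp.span_scale)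
  qed
  have claim: "\<forall>\<alpha>. Poly_Mapping.keys \<alpha> \<subseteq> {..<n} \<longrightarrow> mon_deg \<alpha> = D \<longrightarrow> mon \<alpha> \<in> mp.span (T D)" for D
  proof (induction D rule: less_induct)
    case (less D)
    show ?case
    proof (intro allI impI)
      fix \<alpha> :: "nat \<Rightarrow>\<^sub>0 nat"
      assume ka: "Poly_Mapping.keys \<alpha> \<subseteq> {..<n}" and da: "mon_deg \<alpha> = D"
      show "mon \<alpha> \<in> mp.span (T D)"
      proof (cases "\<forall>j<n. Poly_Mapping.lookup \<alpha> j < d - 1")
        case True
        have "restrict (Poly_Mapping.lookup \<alpha>) {..<n} \<in> PiE {..<n} (\<lambda>_. {..<d-1})"
          using True by simp
        then have aM: "\<alpha> \<in> Mset" unfolding Mset_def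
          using vecpm_restrict[OF ka] by (metis image_eqI)
        have z: "restrict (\<lambda>_. 0) I \<in> PiE I (\<lambda>_. {..D})" by simp
        have "P (restrict (\<lambda>_. 0) I) = 1" unfolding P_def by (intro prod.neutral) auto
        then have "mon \<alpha> = (\<lambda>(\<beta>, \<mu>). P \<beta> * mon \<mu>) (restrict (\<lambda>_. 0) I, \<alpha>)" by simp
        then have "mon \<alpha> \<in> T D" unfolding T_def using z aM by blast
        then show ?thesis by (rule mp.span_base)
      next
        case False
        then obtain j where j: "j < n" "d - 1 \<le> Poly_Mapping.lookup \<alpha> j" by auto
        obtain r where r: "\<forall>i\<in>I. in_vars {..<n} (r i)"
          and rr: "mon (Poly_Mapping.single j (d - 1)) = (\<Sum>i\<in>I. p i * r i)"
          using gen j(1) by blast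
        define \<alpha>' where "\<alpha>' = \<alpha> - Poly_Mapping.single j (d - 1)"
        have asplit: "\<alpha> = Poly_Mapping.single j (d - 1) + \<alpha>'"
          by (rule poly_mapping_eqI) (use j in \<open>auto simp: \<alpha>'_def lookup_add lookup_minus lookup_single when_def\<close>)
        have ka': "Poly_Mapping.keys \<alpha>' \<subseteq> {..<n}"
          using ka keys_minus_nat[of \<alpha> "Poly_Mapping.single j (d - 1)"] unfolding \<alpha>'_def by blast
        have "(mon \<alpha> :: 'k mpoly) = mon (Poly_Mapping.single j (d - 1)) * mon \<alpha>'"
          by (subst asplit) (rule mon_add)
        also have "\<dots> = (\<Sum>i\<in>I. p i * (r i * mon \<alpha>'))"
          unfolding rr by (simp add: sum_distrib_right mult.assoc)
        finally have m1: "(mon \<alpha> :: 'k mpoly) = (\<Sum>i\<in>I. p i * (r i * mon \<alpha>'))" .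
        have "(mon \<alpha> :: 'k mpoly) = hc D (mon \<alpha>)"
          by (rule sym, rule hc_id) (simp add: homogeneous_def da)
        also have "\<dots> = (\<Sum>i\<in>I. hc D (p i * (r i * mon \<alpha>')))"
          by (subst m1) (rule hc_sum)
        also have "\<dots> = (\<Sum>i\<in>I. if e i \<le> D then p i * hc (D - e i) (r i * mon \<alpha>') else 0)"
          using hom by (intro sum.cong refl) (simp add: hc_mult)
        finally have eq: "(mon \<alpha> :: 'k mpoly) = (\<Sum>i\<in>I. if e i \<le> D then p i * hc (D - e i) (r i * mon \<alpha>') else 0)" .
        show ?thesis
          unfolding eq
        proof (intro mp.span_sum)
          fix i assume i: "i \<in> I"
          show "(if e i \<le> D then p i * hc (D - e i) (r i * mon \<alpha>') else 0) \<in> mp.span (T D)"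
          proof (cases "e i \<le> D")
            case False
            then show ?thesis by (simp add: mp.span_zero)
          next
            case True
            define q where "q = hc (D - e i) (r i * mon \<alpha>')"
            have qv: "in_vars {..<n} q"
              unfolding q_def using r i ka' by (intro in_vars_hc in_vars_mult in_vars_mon) auto
            have qh: "homogeneous (D - e i) q" unfolding q_def by (rule hom_hc)
            have lt: "D - e i < D" using hom i True by auto
            have "mon ` Poly_Mapping.keys q \<subseteq> mp.span (T (D - e i))"
            proof
              fix x :: "'k mpoly" assume "x \<in> mon ` Poly_Mapping.keys q"
              then obtain b where b: "b \<in> Poly_Mapping.keys q" "x = mon b" by auto
              have "Poly_Mapping.keys b \<subseteq> {..<n}" using qv b unfolding in_vars_def by auto
              moreover have "mon_deg b = D - e i" using qh b unfolding homogeneous_def by auto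
              ultimately show "x \<in> mp.span (T (D - e i))" using less.IH[OF lt] b by auto
            qed
            then have "mp.span (mon ` Poly_Mapping.keys q) \<subseteq> mp.span (T (D - e i))"
              by (rule mp.span_minimal[OF _ mp.subspace_span])
            with in_span_mon[of q] have "q \<in> mp.span (T (D - e i))" by auto
            then have "p i * q \<in> mp.span (T D)" by (rule mult_span[OF _ lt i])
            then show ?thesis using True by (simp add: q_def)
          qed
        qed
      qed
    qed
  qed
  have n1: "1 \<le> n" using cardI by simp
  define c where "c = d - 1"
  define L where "L = n ^ (n - 1) * c ^ n"
  define B where "B = vecpm n ` PiE {..<n} (\<lambda>_. {..L})"
  have cardB: "card B = (L + 1) ^ n"
    unfolding B_def by (simp add: card_image[OF inj_vecpm] card_PiE)
  have finB: "finite B" unfolding B_def by (intro finite_imageI finite_PiE) auto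
  have cardmB: "card (mon ` B :: 'k mpoly set) = card B"
    by (rule card_image) (simp add: inj_on_def mon_inj)
  have sub: "(mon ` B :: 'k mpoly set) \<subseteq> mp.span (T (n * L))"
  proof
    fix x :: "'k mpoly" assume "x \<in> mon ` B"
    then obtain F where F: "F \<in> PiE {..<n} (\<lambda>_. {..L})" and xe: "x = mon (vecpm n F)"
      unfolding B_def by auto
    have k: "Poly_Mapping.keys (vecpm n F) \<subseteq> {..<n}" by (rule keys_vecpm)
    have "mon_deg (vecpm n F) = (\<Sum>j<n. Poly_Mapping.lookup (vecpm n F) j)"
      by (rule mon_deg_superset[OF _ k]) simp
    also have "\<dots> \<le> (\<Sum>j<n. L)"
      using F by (intro sum_mono) (auto simp: lookup_vecpm)
    finally have dl: "mon_deg (vecpm n F) \<le> n * L" by simp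
    have "x \<in> mp.span (T (mon_deg (vecpm n F)))" using claim k xe by blast
    then show "x \<in> mp.span (T (n * L))" using mp.span_mono[OF T_mono[OF dl]] by blast
  qed
  have finM: "finite Mset" unfolding Mset_def by (intro finite_imageI finite_PiE) auto
  have finT: "finite (T (n * L))" unfolding T_def
    using finM by (intro finite_imageI finite_cartesian_product finite_PiE finI) auto
  have "card (mon ` B :: 'k mpoly set) \<le> card (T (n * L))"
    using mp.independent_span_bound[OF finT indep_mon sub] by simp
  also have "\<dots> \<le> card (PiE I (\<lambda>_. {..n * L}) \<times> Mset)"
    unfolding T_def by (rule card_image_le) (use finM finI in \<open>auto intro: finite_PiE\<close>)
  also have "\<dots> = (n * L + 1) ^ card I * card Mset"
    using finI by (simp add: card_cartesian_product card_PiE)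
  also have "card Mset \<le> c ^ n"
  proof -
    have "card Mset \<le> card (PiE {..<n} (\<lambda>_. {..<d-1}))"
      unfolding Mset_def by (rule card_image_le) (auto intro: finite_PiE)
    also have "\<dots> = c ^ n" by (simp add: card_PiE c_def)
    finally show ?thesis .
  qed
  finally have "(L + 1) ^ n \<le> (n * L + 1) ^ card I * c ^ n"
    using cardmB cardB by simp
  then show False using arith_contra[OF n1 cardI L_def] by blast
qed


lemma homogeneous_0[simp]: "homogeneous e 0"
  unfolding homogeneous_def by simp

lemma hom_diag:
  assumes "d > 0"
  shows "homogeneous d (diagonal_form n d a)"
  unfolding homogeneous_def
proof
  fix m assume "m \<in> Poly_Mapping.keys (diagonal_form n d a)"
  moreover have "Poly_Mapping.keys (diagonal_form n d a) \<subseteq>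
     (\<Union>i\<in>{..<n}. Poly_Mapping.keys (Poly_Mapping.single (Poly_Mapping.single i d) (a i)))"
    unfolding diagonal_form_def by (rule keys_sum)
  ultimately obtain i where "m \<in> Poly_Mapping.keys (Poly_Mapping.single (Poly_Mapping.single i d) (a i))"
    by (meson UN_E subsetD)
  then have "m = Poly_Mapping.single i d" by (simp split: if_splits)
  then show "mon_deg m = d" using assms by (simp add: mon_deg_def)
qed

lemma key:
  fixes a :: "nat \<Rightarrow> 'k::field" and n d s :: nat and g h :: "nat \<Rightarrow> 'k mpoly"
  assumes d0: "d > 0" and dk: "of_nat d \<noteq> (0::'k)" and an: "\<forall>i<n. a i \<noteq> 0"
    and G: "\<forall>i<s. (\<exists>e<d. homogeneous e (g i)) \<and> in_vars {..<n} (g i)"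
    and H: "\<forall>i<s. (\<exists>e<d. homogeneous e (h i)) \<and> in_vars {..<n} (h i)"
    and F: "diagonal_form n d a = (\<Sum>i<s. g i * h i)"
  shows "n \<le> 2 * s"
proof (rule ccontr)
  assume "\<not> n \<le> 2 * s"
  then have sn: "2 * s < n" by simp
  have "\<forall>i. \<exists>e. i < s \<longrightarrow> e < d \<and> homogeneous e (g i)"
  proof
    fix i show "\<exists>e. i < s \<longrightarrow> e < d \<and> homogeneous e (g i)"
      using G by (cases "i < s") auto
  qed
  then have "\<exists>E. \<forall>i. i < s \<longrightarrow> E i < d \<and> homogeneous (E i) (g i)" by (rule choice)
  then obtain E where E0: "\<forall>i. i < s \<longrightarrow> E i < d \<and> homogeneous (E i) (g i)" by (elim exE)
  have E: "E i < d \<and> homogeneous (E i) (g i)" if "i < s" for i using E0 that by simp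
  have "\<forall>i. \<exists>e. i < s \<longrightarrow> e < d \<and> homogeneous e (h i)"
  proof
    fix i show "\<exists>e. i < s \<longrightarrow> e < d \<and> homogeneous e (h i)"
      using H by (cases "i < s") auto
  qed
  then have "\<exists>E. \<forall>i. i < s \<longrightarrow> E i < d \<and> homogeneous (E i) (h i)" by (rule choice)
  then obtain E' where E0': "\<forall>i. i < s \<longrightarrow> E' i < d \<and> homogeneous (E' i) (h i)" by (elim exE)
  have E': "E' i < d \<and> homogeneous (E' i) (h i)" if "i < s" for i using E0' that by simp
  define good where "good i = (E i + E' i = d)" for i
  define g' where "g' i = (if good i then g i else 0)" for i
  define h' where "h' i = (if good i then h i else 0)" for i
  define e1 where "e1 i = (if good i then E i else 1)" for i
  define e2 where "e2 i = (if good i then E' i else 1)" for i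
  let ?f = "diagonal_form n d a"
  have hg': "homogeneous (e1 i) (g' i) \<and> 1 \<le> e1 i" if "i < s" for i
    using E[OF that] E'[OF that] by (auto simp: g'_def e1_def good_def)
  have hh': "homogeneous (e2 i) (h' i) \<and> 1 \<le> e2 i" if "i < s" for i
    using E[OF that] E'[OF that] by (auto simp: h'_def e2_def good_def)
  have vg': "in_vars {..<n} (g' i)" if "i < s" for i using G that by (simp add: g'_def)
  have vh': "in_vars {..<n} (h' i)" if "i < s" for i using H that by (simp add: h'_def)
  have F': "?f = (\<Sum>i<s. g' i * h' i)"
  proof -
    have "?f = hc d ?f" by (rule hc_id[symmetric, OF hom_diag[OF d0]])
    also have "\<dots> = (\<Sum>i<s. hc d (g i * h i))" unfolding F by (rule hc_sum)
    also have "\<dots> = (\<Sum>i<s. g' i * h' i)"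
    proof (rule sum.cong[OF refl])
      fix i assume "i \<in> {..<s}"
      then have i: "i < s" by simp
      have hm: "homogeneous (E i + E' i) (g i * h i)"
        using E[OF i] E'[OF i] by (intro homogeneous_mult) auto
      show "hc d (g i * h i) = g' i * h' i"
      proof (cases "good i")
        case True
        then show ?thesis using hm by (simp add: g'_def h'_def good_def hc_id)
      next
        case False
        have "hc d (g i * h i) = 0"
          using hm False by (intro hc_zero) (auto simp: homogeneous_def good_def)
        then show ?thesis using False by (simp add: g'_def h'_def)
      qed
    qed
    finally show ?thesis .
  qed
  define I where "I = {..<s} \<times> (UNIV :: bool set)"
  define p where "p x = (if snd x then g' (fst x) else h' (fst x))" for x
  define e where "e x = (if snd x then e1 (fst x) else e2 (fst x))" for x
  have finI: "finite I" unfolding I_def by simp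
  have cardI: "card I < n" unfolding I_def using sn by (simp add: card_cartesian_product)
  have hom: "\<forall>x\<in>I. homogeneous (e x) (p x) \<and> 1 \<le> e x"
    using hg' hh' by (auto simp: I_def p_def e_def)
  have gen: "\<forall>j<n. \<exists>r. (\<forall>x\<in>I. in_vars {..<n} (r x)) \<and>
                 mon (Poly_Mapping.single j (d - 1)) = (\<Sum>x\<in>I. p x * r x)"
  proof (intro allI impI)
    fix j assume j: "j < n"
    define c where "c = of_nat d * a j"
    have c0: "c \<noteq> 0" using dk an j by (simp add: c_def)
    define ic where "ic = inverse c"
    define r where "r x = (if snd x then sc ic (der j (h' (fst x))) else sc ic (der j (g' (fst x))))" for x
    have rv: "\<forall>x\<in>I. in_vars {..<n} (r x)"
      using vg' vh' by (auto simp: I_def r_def intro!: in_vars_sc in_vars_der)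
    have "mon (Poly_Mapping.single j (d - 1)) = sc ic (Poly_Mapping.single (Poly_Mapping.single j (d - 1)) c)"
      using c0 by (simp add: sc_mon[symmetric] ic_def)
    also have "Poly_Mapping.single (Poly_Mapping.single j (d - 1)) c = der j ?f"
      unfolding c_def by (rule sym, rule der_diag[OF j])
    also have "der j ?f = (\<Sum>i<s. der j (g' i) * h' i + g' i * der j (h' i))"
      by (subst F') (simp add: der_sum der_mult)
    also have "sc ic \<dots> = (\<Sum>i<s. g' i * sc ic (der j (h' i)) + h' i * sc ic (der j (g' i)))"
      by (simp add: sc_def sum_distrib_left algebra_simps)
    also have "\<dots> = (\<Sum>i<s. \<Sum>b\<in>UNIV. p (i, b) * r (i, b))"
      by (simp add: UNIV_bool p_def r_def add.commute)
    also have "\<dots> = (\<Sum>x\<in>I. p x * r x)"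
      unfolding I_def by (simp add: sum.cartesian_product)
    finally show "\<exists>r. (\<forall>x\<in>I. in_vars {..<n} (r x)) \<and>
                 mon (Poly_Mapping.single j (d - 1)) = (\<Sum>x\<in>I. p x * r x)"
      using rv by blast
  qed
  show False by (rule core[OF finI cardI hom gen])
qed


lemma enat_Inf_bound:
  assumes "\<forall>x\<in>S. enat n \<le> 2 * x"
  shows "enat n \<le> 2 * Inf (S :: enat set)"
proof (cases "S = {}")
  case True
  then show ?thesis by (simp add: Inf_enat_def numeral_eq_enat)
next
  case False
  then obtain y where "y \<in> S" by blast
  then have "(LEAST x. x \<in> S) \<in> S" by (rule LeastI)
  then show ?thesis using assms False by (simp add: Inf_enat_def)
qed

theorem proposition3p3:
  fixes a :: "nat \<Rightarrow> 'k::field" and n d :: nat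
  assumes "d > 0"
    and "of_nat d \<noteq> (0::'k)"
    and "\<forall>i<n. a i \<noteq> 0"
  shows "enat n \<le> 2 * strength n d (diagonal_form n d a)"
  unfolding strength_def
proof (rule enat_Inf_bound, rule ballI)
  fix x assume "x \<in> {enat s | s. \<exists>g h :: nat \<Rightarrow> 'k mpoly.
      (\<forall>i<s. (\<exists>e<d. homogeneous e (g i)) \<and> in_vars {..<n} (g i)) \<and>
      (\<forall>i<s. (\<exists>e<d. homogeneous e (h i)) \<and> in_vars {..<n} (h i)) \<and>
      diagonal_form n d a = (\<Sum>i<s. g i * h i)}"
  then obtain s g h where x: "x = enat s"
    and G: "\<forall>i<s. (\<exists>e<d. homogeneous e (g i)) \<and> in_vars {..<n} (g i)"
    and H: "\<forall>i<s. (\<exists>e<d. homogeneous e (h i)) \<and> in_vars {..<n} (h i)"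
    and F: "diagonal_form n d a = (\<Sum>i<s. g i * (h i :: 'k mpoly))"
    by blast
  have "n \<le> 2 * s" by (rule key[OF assms G H F])
  then show "enat n \<le> 2 * x" by (simp add: x numeral_eq_enat)
qed

end
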